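(* Let $p$ be a prime and let $\mathcal{A}$ be an $S$-ring over a cyclic $p$-group $G$ with $\mathrm{rad}(\mathcal{A})>e$. Then there exists an $\mathcal{A}$-section $U/L$ such that $\mathcal{A}$ is the proper $U/L$-wreath product and $\mathrm{rad}(\mathcal{A}_U)=e$.
   Context: Let $G$ be a finite group with identity $e$; for $X\subseteq G$ write $\underline{X}=\sum_{x\in X}x\in\mathbb{Z}G$. An $S$-ring over $G$ is a subring $\mathcal{A}\subseteq\mathbb{Z}G$ for which there is a partition $\mathcal{S}(\mathcal{A})$ of $G$ (the basic sets) with $\{e\}\in\mathcal{S}(\mathcal{A})$, $X^{-1}\in\mathcal{S}(\mathcal{A})$ whenever $X\in\mathcal{S}(\mathcal{A})$, and $\mathcal{A}=\mathrm{Span}_{\mathbb{Z}}\{\underline{X}:X\in\mathcal{S}(\mathcal{A})\}$. $X\subseteq G$ is an $\mathcal{A}$-set if $\underline X\in\mathcal{A}$; an $\mathcal{A}$-subgroup is a subgroup that is an $\mathcal{A}$-set; an $\mathcal{A}$-section is $U/L$ with $L\trianglelefteq U\leq G$ both $\mathcal{A}$-subgroups; $\mathcal{A}_U=\mathrm{Span}_{\mathbb{Z}}\{\underline X:X\in\mathcal{S}(\mathcal{A}),X\subseteq U\}$ is an $S$-ring over $U$. For $X\subseteq G$, $\mathrm{rad}(X)=\{g\in G:Xg=gX=X\}$. For an $S$-ring $\mathcal{B}$ over a cyclic group $H$, $\mathrm{rad}(\mathcal{B})=\mathrm{rad}(X)$ where $X$ is any basic set of $\mathcal{B}$ containing a generator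 of $H$ (this does not depend on the choice of $X$). $\mathcal{A}$ is the $U/L$-wreath product if $L\trianglelefteq G$ and $L\leq\mathrm{rad}(X)$ for every basic set $X\not\subseteq U$; it is proper if $L\neq\{e\}$ and $U\neq G$. *)

theory Defs
  imports "HOL-Algebra.Algebra"
begin

text \<open>Elements of the integral group ring ZG are represented as functions
  'a => int vanishing outside carrier G (finitely supported as G is finite).\<close>

definition set_elem :: "'a set \<Rightarrow> 'a \<Rightarrow> int" where
  "set_elem A = (\<lambda>g. if g \<in> A then 1 else 0)"

definition gr_mult :: "('a, 'b) monoid_scheme \<Rightarrow> ('a \<Rightarrow> int) \<Rightarrow> ('a \<Rightarrow> int) \<Rightarrow> 'a \<Rightarrow> int" where
  "gr_mult G f h = (\<lambda>z. if z \<in> carrier G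
      then (\<Sum>x\<in>carrier G. f x * h (inv\<^bsub>G\<^esub> x \<otimes>\<^bsub>G\<^esub> z)) else 0)"

definition zspan :: "'a set set \<Rightarrow> ('a \<Rightarrow> int) set" where
  "zspan S = {f. \<exists>c. f = (\<lambda>g. \<Sum>A\<in>S. c A * set_elem A g)}"

text \<open>S is the set of basic sets of an S-ring over G: a partition of G
  containing {e}, closed under inversion, whose Z-span is a subring of ZG
  (it is automatically an additive subgroup containing the identity set_elem {e}).\<close>
definition is_Sring :: "('a, 'b) monoid_scheme \<Rightarrow> 'a set set \<Rightarrow> bool" where
  "is_Sring G S \<longleftrightarrow>
     (\<forall>A\<in>S. A \<noteq> {} \<and> A \<subseteq> carrier G) \<and> \<Union>S = carrier G \<and>
     (\<forall>A\<in>S. \<forall>B\<in>S. A \<noteq> B \<longrightarrow> A \<inter> B = {}) \<and>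
     {\<one>\<^bsub>G\<^esub>} \<in> S \<and>
     (\<forall>A\<in>S. (\<lambda>x. inv\<^bsub>G\<^esub> x) ` A \<in> S) \<and>
     (\<forall>f\<in>zspan S. \<forall>h\<in>zspan S. gr_mult G f h \<in> zspan S)"

definition A_set :: "('a, 'b) monoid_scheme \<Rightarrow> 'a set set \<Rightarrow> 'a set \<Rightarrow> bool" where
  "A_set G S A \<longleftrightarrow> A \<subseteq> carrier G \<and> set_elem A \<in> zspan S"

definition A_subgroup :: "('a, 'b) monoid_scheme \<Rightarrow> 'a set set \<Rightarrow> 'a set \<Rightarrow> bool" where
  "A_subgroup G S H \<longleftrightarrow> subgroup H G \<and> A_set G S H"

definition A_section :: "('a, 'b) monoid_scheme \<Rightarrow> 'a set set \<Rightarrow> 'a set \<Rightarrow> 'a set \<Rightarrow> bool" where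
  "A_section G S U L \<longleftrightarrow> A_subgroup G S U \<and> A_subgroup G S L \<and> L \<subseteq> U \<and>
     L \<lhd> (G\<lparr>carrier := U\<rparr>)"

definition restr :: "'a set set \<Rightarrow> 'a set \<Rightarrow> 'a set set" where
  "restr S U = {A\<in>S. A \<subseteq> U}"

definition rad :: "('a, 'b) monoid_scheme \<Rightarrow> 'a set \<Rightarrow> 'a set \<Rightarrow> 'a set" where
  "rad G H A = {g\<in>H. A #>\<^bsub>G\<^esub> g = A \<and> g <#\<^bsub>G\<^esub> A = A}"

definition rad_Sring :: "('a, 'b) monoid_scheme \<Rightarrow> 'a set \<Rightarrow> 'a set set \<Rightarrow> 'a set" where
  "rad_Sring G H S = rad G H (SOME A. A \<in> S \<and> (\<exists>x\<in>A. generate G {x} = H))"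

definition wreath :: "('a, 'b) monoid_scheme \<Rightarrow> 'a set set \<Rightarrow> 'a set \<Rightarrow> 'a set \<Rightarrow> bool" where
  "wreath G S U L \<longleftrightarrow> L \<lhd> G \<and> (\<forall>A\<in>S. \<not> A \<subseteq> U \<longrightarrow> L \<subseteq> rad G (carrier G) A)"

definition proper_wreath :: "('a, 'b) monoid_scheme \<Rightarrow> 'a set set \<Rightarrow> 'a set \<Rightarrow> 'a set \<Rightarrow> bool" where
  "proper_wreath G S U L \<longleftrightarrow> wreath G S U L \<and> L \<noteq> {\<one>\<^bsub>G\<^esub>} \<and> U \<noteq> carrier G"

end

theory Submission
  imports Defs
begin


locale sr = comm_group G for G :: "('a,'b) monoid_scheme" (structure) +
  fixes S :: "'a set set"
  assumes finG: "finite (carrier G)" and Sr: "is_Sring G S"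
begin

lemma Sr_parts: "\<forall>A\<in>S. A \<noteq> {} \<and> A \<subseteq> carrier G" "\<Union>S = carrier G"
   "\<forall>A\<in>S. \<forall>B\<in>S. A \<noteq> B \<longrightarrow> A \<inter> B = {}" "{\<one>} \<in> S"
   "\<forall>A\<in>S. (\<lambda>x. inv x) ` A \<in> S"
   "\<forall>f\<in>zspan S. \<forall>h\<in>zspan S. gr_mult G f h \<in> zspan S"
  using Sr unfolding is_Sring_def by simp_all

lemma S_sub: "A \<in> S \<Longrightarrow> A \<subseteq> carrier G" using Sr_parts(1) by blast
lemma S_ne: "A \<in> S \<Longrightarrow> A \<noteq> {}" using Sr_parts(1) by blast
lemma S_Un: "\<Union>S = carrier G" using Sr_parts(2) .
lemma S_disj: "A \<in> S \<Longrightarrow> B \<in> S \<Longrightarrow> x \<in> A \<Longrightarrow> x \<in> B \<Longrightarrow> A = B"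
  using Sr_parts(3) by blast
lemma S_one: "{\<one>} \<in> S" using Sr_parts(4) .
lemma S_inv: "A \<in> S \<Longrightarrow> (\<lambda>x. inv x) ` A \<in> S" using Sr_parts(5) by blast
lemma S_mult: "f \<in> zspan S \<Longrightarrow> h \<in> zspan S \<Longrightarrow> gr_mult G f h \<in> zspan S"
  using Sr_parts(6) by blast
lemma S_fin: "finite S"
proof -
  have "S \<subseteq> Pow (carrier G)" using S_sub by blast
  moreover have "finite (Pow (carrier G))" using finG by simp
  ultimately show ?thesis by (rule finite_subset)
qed
lemma S_cover: "x \<in> carrier G \<Longrightarrow> \<exists>A\<in>S. x \<in> A" using S_Un by blast

lemma sum_blk:
  assumes "B \<in> S" "x \<in> B"
  shows "(\<Sum>A\<in>S. c A * set_elem A x) = c B"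
proof -
  have "(\<Sum>A\<in>S. c A * set_elem A x) = c B * set_elem B x + (\<Sum>A\<in>S-{B}. c A * set_elem A x)"
    using S_fin assms(1) by (simp add: sum.remove)
  moreover have "(\<Sum>A\<in>S-{B}. c A * set_elem A x) = 0"
  proof (rule sum.neutral, rule ballI)
    fix A assume "A \<in> S - {B}"
    then have "x \<notin> A" using assms S_disj by blast
    then show "c A * set_elem A x = 0" by (simp add: set_elem_def)
  qed
  ultimately show ?thesis using assms by (simp add: set_elem_def)
qed

lemma zspan_iff:
  "f \<in> zspan S \<longleftrightarrow> (\<forall>x. x \<notin> carrier G \<longrightarrow> f x = 0) \<and> (\<forall>A\<in>S. \<forall>x\<in>A. \<forall>y\<in>A. f x = f y)"
proof
  assume "f \<in> zspan S"
  then obtain c where c: "f = (\<lambda>g. \<Sum>A\<in>S. c A * set_elem A g)" unfolding zspan_def by blast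
  show "(\<forall>x. x \<notin> carrier G \<longrightarrow> f x = 0) \<and> (\<forall>A\<in>S. \<forall>x\<in>A. \<forall>y\<in>A. f x = f y)"
  proof (intro conjI allI ballI impI)
    fix x assume "x \<notin> carrier G"
    then have "\<forall>A\<in>S. x \<notin> A" using S_sub by blast
    then show "f x = 0" unfolding c by (intro sum.neutral) (simp add: set_elem_def)
  next
    fix A x y assume "A \<in> S" "x \<in> A" "y \<in> A"
    then show "f x = f y" unfolding c using sum_blk by simp
  qed
next
  assume H: "(\<forall>x. x \<notin> carrier G \<longrightarrow> f x = 0) \<and> (\<forall>A\<in>S. \<forall>x\<in>A. \<forall>y\<in>A. f x = f y)"
  define c where "c A = f (SOME x. x \<in> A)" for A
  have "f = (\<lambda>g. \<Sum>A\<in>S. c A * set_elem A g)"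
  proof
    fix g show "f g = (\<Sum>A\<in>S. c A * set_elem A g)"
    proof (cases "g \<in> carrier G")
      case True
      then obtain B where B: "B \<in> S" "g \<in> B" using S_cover by blast
      then have "(\<Sum>A\<in>S. c A * set_elem A g) = c B" by (rule sum_blk)
      also have "c B = f g" unfolding c_def using H B by (metis someI)
      finally show ?thesis by simp
    next
      case False
      then have "\<forall>A\<in>S. g \<notin> A" using S_sub by blast
      then have "(\<Sum>A\<in>S. c A * set_elem A g) = 0" by (intro sum.neutral) (simp add: set_elem_def)
      then show ?thesis using H False by simp
    qed
  qed
  then show "f \<in> zspan S" unfolding zspan_def by blast
qed

lemma Aset_iff: "A_set G S Y \<longleftrightarrow> Y \<subseteq> carrier G \<and> (\<forall>A\<in>S. A \<subseteq> Y \<or> A \<inter> Y = {})"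
proof -
  have "(\<forall>A\<in>S. \<forall>x\<in>A. \<forall>y\<in>A. set_elem Y x = set_elem Y y) \<longleftrightarrow> (\<forall>A\<in>S. A \<subseteq> Y \<or> A \<inter> Y = {})"
  proof
    assume h: "\<forall>A\<in>S. \<forall>x\<in>A. \<forall>y\<in>A. set_elem Y x = set_elem Y y"
    show "\<forall>A\<in>S. A \<subseteq> Y \<or> A \<inter> Y = {}"
    proof
      fix A assume A: "A \<in> S"
      show "A \<subseteq> Y \<or> A \<inter> Y = {}"
      proof (rule ccontr)
        assume "\<not> (A \<subseteq> Y \<or> A \<inter> Y = {})"
        then obtain x y where "x \<in> A" "x \<notin> Y" "y \<in> A" "y \<in> Y" by blast
        with h A have "set_elem Y x = set_elem Y y" by blast
        with \<open>x \<notin> Y\<close> \<open>y \<in> Y\<close> show False by (simp add: set_elem_def)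
      qed
    qed
  next
    assume h: "\<forall>A\<in>S. A \<subseteq> Y \<or> A \<inter> Y = {}"
    show "\<forall>A\<in>S. \<forall>x\<in>A. \<forall>y\<in>A. set_elem Y x = set_elem Y y"
    proof (intro ballI)
      fix A x y assume "A \<in> S" "x \<in> A" "y \<in> A"
      with h have "A \<subseteq> Y \<or> A \<inter> Y = {}" by blast
      then show "set_elem Y x = set_elem Y y" using \<open>x \<in> A\<close> \<open>y \<in> A\<close> by (auto simp: set_elem_def)
    qed
  qed
  moreover have "(\<forall>x. x \<notin> carrier G \<longrightarrow> set_elem Y x = 0) \<longleftrightarrow> Y \<subseteq> carrier G"
    by (auto simp: set_elem_def split: if_splits)
  ultimately show ?thesis unfolding A_set_def zspan_iff by blast
qed

lemma Aset_basic: assumes "A \<in> S" shows "A_set G S A"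
  unfolding Aset_iff
proof (intro conjI ballI)
  show "A \<subseteq> carrier G" using S_sub assms .
  fix B assume "B \<in> S"
  show "B \<subseteq> A \<or> B \<inter> A = {}"
  proof (cases "B \<inter> A = {}")
    case False
    then obtain x where "x \<in> B" "x \<in> A" by blast
    then have "B = A" using S_disj assms \<open>B \<in> S\<close> by blast
    then show ?thesis by blast
  qed simp
qed

lemma Aset_level:
  assumes "f \<in> zspan S" shows "A_set G S {z \<in> carrier G. P (f z)}"
  unfolding Aset_iff
proof (intro conjI ballI)
  show "{z \<in> carrier G. P (f z)} \<subseteq> carrier G" by blast
  fix A assume A: "A \<in> S"
  have c: "\<forall>x\<in>A. \<forall>y\<in>A. f x = f y" using assms A unfolding zspan_iff by blast
  show "A \<subseteq> {z \<in> carrier G. P (f z)} \<or> A \<inter> {z \<in> carrier G. P (f z)} = {}"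
  proof (cases "\<exists>x\<in>A. P (f x)")
    case True
    then obtain x where x: "x \<in> A" "P (f x)" by blast
    have "A \<subseteq> {z \<in> carrier G. P (f z)}"
    proof
      fix y assume "y \<in> A"
      then have "f y = f x" using c x by blast
      then show "y \<in> {z \<in> carrier G. P (f z)}" using x \<open>y \<in> A\<close> S_sub[OF A] by auto
    qed
    then show ?thesis by blast
  next
    case False then show ?thesis by blast
  qed
qed

lemma Aset_Int: "A_set G S Y \<Longrightarrow> A_set G S Z \<Longrightarrow> A_set G S (Y \<inter> Z)"
  unfolding Aset_iff by blast
lemma Aset_Un: "A_set G S Y \<Longrightarrow> A_set G S Z \<Longrightarrow> A_set G S (Y \<union> Z)"
  unfolding Aset_iff by blast
lemma Aset_Diff: "A_set G S Y \<Longrightarrow> A_set G S Z \<Longrightarrow> A_set G S (Y - Z)"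
  unfolding Aset_iff by blast
lemma Aset_Union: "(\<And>Y. Y \<in> F \<Longrightarrow> A_set G S Y) \<Longrightarrow> A_set G S (\<Union>F)"
  unfolding Aset_iff by blast
lemma Aset_carrier: "A_set G S (carrier G)"
  unfolding Aset_iff using S_sub by blast
lemma Aset_basic_sub: "A_set G S Y \<Longrightarrow> A \<in> S \<Longrightarrow> x \<in> A \<Longrightarrow> x \<in> Y \<Longrightarrow> A \<subseteq> Y"
  unfolding Aset_iff by blast

lemma Aset_inv: assumes "A_set G S Y" shows "A_set G S ((\<lambda>x. inv x) ` Y)"
  unfolding Aset_iff
proof (intro conjI ballI)
  show "(\<lambda>x. inv x) ` Y \<subseteq> carrier G" using assms unfolding Aset_iff by auto
next
  fix A assume A: "A \<in> S"
  have B: "(\<lambda>x. inv x) ` A \<in> S" using S_inv A by blast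
  have AB: "A = (\<lambda>x. inv x) ` ((\<lambda>x. inv x) ` A)"
  proof -
    have "(\<lambda>x. inv x) ` ((\<lambda>x. inv x) ` A) = (\<lambda>x. inv (inv x)) ` A" by (simp add: image_image)
    also have "\<dots> = (\<lambda>x. x) ` A" using S_sub[OF A] by (intro image_cong) auto
    finally show ?thesis by simp
  qed
  have "\<forall>A\<in>S. A \<subseteq> Y \<or> A \<inter> Y = {}" using assms unfolding Aset_iff by (rule conjunct2)
  then have "(\<lambda>x. inv x) ` A \<subseteq> Y \<or> (\<lambda>x. inv x) ` A \<inter> Y = {}" using B by (rule bspec)
  then show "A \<subseteq> (\<lambda>x. inv x) ` Y \<or> A \<inter> (\<lambda>x. inv x) ` Y = {}"
  proof
    assume "(\<lambda>x. inv x) ` A \<subseteq> Y"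
    then have "(\<lambda>x. inv x) ` (\<lambda>x. inv x) ` A \<subseteq> (\<lambda>x. inv x) ` Y" by (rule image_mono)
    then have "A \<subseteq> (\<lambda>x. inv x) ` Y" by (simp only: AB[symmetric])
    then show ?thesis by blast
  next
    assume h: "(\<lambda>x. inv x) ` A \<inter> Y = {}"
    have "A \<inter> (\<lambda>x. inv x) ` Y = {}"
    proof (rule ccontr)
      assume "A \<inter> (\<lambda>x. inv x) ` Y \<noteq> {}"
      then obtain y where y: "y \<in> Y" "inv y \<in> A" by blast
      have "y \<in> carrier G" using assms y(1) unfolding Aset_iff by blast
      then have "inv (inv y) = y" by simp
      then have "y \<in> (\<lambda>x. inv x) ` A" using y(2) by (metis image_eqI)
      with h y(1) show False by blast
    qed
    then show ?thesis by blast
  qed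
qed

end



context sr begin

lemma gr_mult_set:
  assumes "Y \<subseteq> carrier G" "z \<in> carrier G"
  shows "gr_mult G (set_elem Y) h z = (\<Sum>x\<in>Y. h (inv x \<otimes> z))"
proof -
  have "gr_mult G (set_elem Y) h z = (\<Sum>x\<in>carrier G. (if x \<in> Y then h (inv x \<otimes> z) else 0))"
    unfolding gr_mult_def using assms(2) by (simp add: set_elem_def) (intro sum.cong, auto)
  also have "\<dots> = (\<Sum>x\<in>{x \<in> carrier G. x \<in> Y}. h (inv x \<otimes> z))"
    using finG by (simp add: sum.inter_filter)
  also have "{x \<in> carrier G. x \<in> Y} = Y" using assms(1) by blast
  finally show ?thesis .
qed

lemma sum_indicator_card:
  assumes "finite Y"
  shows "(\<Sum>x\<in>Y. set_elem Z (f x)) = int (card {x\<in>Y. f x \<in> Z})"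
proof -
  have "(\<Sum>x\<in>Y. set_elem Z (f x)) = (\<Sum>x\<in>Y. (if f x \<in> Z then 1 else 0))"
    by (simp add: set_elem_def)
  also have "\<dots> = (\<Sum>x\<in>{x\<in>Y. f x \<in> Z}. 1)"
    by (rule sum.inter_filter[OF assms, symmetric])
  also have "\<dots> = int (card {x\<in>Y. f x \<in> Z})" by simp
  finally show ?thesis .
qed

lemma gr_mult_sets:
  assumes "Y \<subseteq> carrier G" "z \<in> carrier G"
  shows "gr_mult G (set_elem Y) (set_elem Z) z = int (card {x\<in>Y. inv x \<otimes> z \<in> Z})"
proof -
  have fY: "finite Y" using assms(1) finG finite_subset by blast
  show ?thesis unfolding gr_mult_set[OF assms] by (rule sum_indicator_card[OF fY])
qed

definition prodset :: "'a set \<Rightarrow> 'a set \<Rightarrow> 'a set" where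
  "prodset Y Z = {y \<otimes> z | y z. y \<in> Y \<and> z \<in> Z}"

lemma Aset_prodset:
  assumes Y: "A_set G S Y" and Z: "A_set G S Z"
  shows "A_set G S (prodset Y Z)"
proof -
  have Yc: "Y \<subseteq> carrier G" and Zc: "Z \<subseteq> carrier G" using Y Z unfolding A_set_def by auto
  define f where "f = gr_mult G (set_elem Y) (set_elem Z)"
  have fz: "f \<in> zspan S" unfolding f_def using S_mult Y Z unfolding A_set_def by blast
  have "prodset Y Z = {z \<in> carrier G. f z \<noteq> 0}"
  proof (intro equalityI subsetI)
    fix w assume "w \<in> prodset Y Z"
    then obtain y z where yz: "w = y \<otimes> z" "y \<in> Y" "z \<in> Z" unfolding prodset_def by blast
    have yc: "y \<in> carrier G" and zc: "z \<in> carrier G" using yz Yc Zc by auto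
    then have wc: "w \<in> carrier G" using yz by simp
    have "inv y \<otimes> w = z" using yz yc zc by (simp add: m_assoc[symmetric])
    then have "y \<in> {x\<in>Y. inv x \<otimes> w \<in> Z}" using yz by simp
    moreover have "finite {x\<in>Y. inv x \<otimes> w \<in> Z}" using Yc finG finite_subset by fastforce
    ultimately have "card {x\<in>Y. inv x \<otimes> w \<in> Z} \<noteq> 0" by (metis card_0_eq empty_iff)
    then show "w \<in> {z \<in> carrier G. f z \<noteq> 0}" unfolding f_def using gr_mult_sets[OF Yc wc] wc by simp
  next
    fix w assume w: "w \<in> {z \<in> carrier G. f z \<noteq> 0}"
    then have wc: "w \<in> carrier G" by simp
    have "card {x\<in>Y. inv x \<otimes> w \<in> Z} \<noteq> 0" using w unfolding f_def using gr_mult_sets[OF Yc wc] by simp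
    then obtain y where y: "y \<in> Y" "inv y \<otimes> w \<in> Z" by (metis (no_types, lifting) card.empty empty_Collect_eq)
    have yc: "y \<in> carrier G" using y Yc by auto
    have "w = y \<otimes> (inv y \<otimes> w)" using yc wc by (simp add: m_assoc[symmetric])
    then show "w \<in> prodset Y Z" unfolding prodset_def using y by blast
  qed
  then show ?thesis using Aset_level[OF fz] by simp
qed

definition stab :: "'a set \<Rightarrow> 'a set" where
  "stab Q = {z \<in> carrier G. \<forall>x\<in>Q. x \<otimes> z \<in> Q}"

lemma Aset_stab:
  assumes Q: "A_set G S Q"
  shows "A_set G S (stab Q)"
proof -
  have Qc: "Q \<subseteq> carrier G" using Q unfolding A_set_def by auto
  have fX: "finite Q" using Qc finG finite_subset by blast
  have IX: "A_set G S ((\<lambda>x. inv x) ` Q)" using Aset_inv[OF Q] .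
  have IXc: "(\<lambda>x. inv x) ` Q \<subseteq> carrier G" using IX unfolding A_set_def by auto
  define f where "f = gr_mult G (set_elem ((\<lambda>x. inv x) ` Q)) (set_elem Q)"
  have fz: "f \<in> zspan S" unfolding f_def using S_mult Q IX unfolding A_set_def by blast
  have injX: "inj_on (\<lambda>x. inv x) Q" using Qc by (intro inj_onI) (metis inv_inv subsetD)
  have fval: "f z = int (card {x\<in>Q. x \<otimes> z \<in> Q})" if zc: "z \<in> carrier G" for z
  proof -
    have "f z = (\<Sum>x\<in>(\<lambda>x. inv x) ` Q. set_elem Q (inv x \<otimes> z))"
      unfolding f_def by (rule gr_mult_set[OF IXc zc])
    also have "\<dots> = (\<Sum>x\<in>Q. set_elem Q (inv (inv x) \<otimes> z))"
      using sum.reindex[OF injX] by simp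
    also have "\<dots> = (\<Sum>x\<in>Q. set_elem Q (x \<otimes> z))"
      using Qc by (intro sum.cong) auto
    also have "\<dots> = int (card {x\<in>Q. x \<otimes> z \<in> Q})" by (rule sum_indicator_card[OF fX])
    finally show ?thesis .
  qed
  have "stab Q = {z \<in> carrier G. f z = int (card Q)}"
  proof (intro equalityI subsetI)
    fix z assume "z \<in> stab Q"
    then have zc: "z \<in> carrier G" and h: "\<forall>x\<in>Q. x \<otimes> z \<in> Q" unfolding stab_def by auto
    have "{x\<in>Q. x \<otimes> z \<in> Q} = Q" using h by blast
    then show "z \<in> {z \<in> carrier G. f z = int (card Q)}" using fval[OF zc] zc by simp
  next
    fix z assume "z \<in> {z \<in> carrier G. f z = int (card Q)}"
    then have zc: "z \<in> carrier G" and h: "card {x\<in>Q. x \<otimes> z \<in> Q} = card Q" using fval by auto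
    have "{x\<in>Q. x \<otimes> z \<in> Q} = Q"
      using card_subset_eq[OF fX _ h] by blast
    then show "z \<in> stab Q" unfolding stab_def using zc by blast
  qed
  then show ?thesis using Aset_level[OF fz] by simp
qed

lemma stab_surj:
  assumes Qc: "Q \<subseteq> carrier G" and z: "z \<in> stab Q"
  shows "(\<lambda>x. x \<otimes> z) ` Q = Q"
proof -
  have fX: "finite Q" using Qc finG finite_subset by blast
  have zc: "z \<in> carrier G" using z unfolding stab_def by auto
  have sub: "(\<lambda>x. x \<otimes> z) ` Q \<subseteq> Q" using z unfolding stab_def by auto
  have "inj_on (\<lambda>x. x \<otimes> z) Q" using Qc zc by (intro inj_onI) (meson r_cancel subsetD)
  then have "card ((\<lambda>x. x \<otimes> z) ` Q) = card Q" by (rule card_image)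
  then show ?thesis using card_subset_eq[OF fX sub] by simp
qed

lemma stab_subgroup:
  assumes Qc: "Q \<subseteq> carrier G"
  shows "subgroup (stab Q) G"
proof (rule subgroupI)
  show "stab Q \<subseteq> carrier G" unfolding stab_def by auto
  show "stab Q \<noteq> {}"
  proof -
    have "\<one> \<in> stab Q" unfolding stab_def using Qc by auto
    then show ?thesis by blast
  qed
next
  fix a assume a: "a \<in> stab Q"
  have ac: "a \<in> carrier G" using a unfolding stab_def by auto
  have "\<forall>x\<in>Q. x \<otimes> inv a \<in> Q"
  proof
    fix x assume x: "x \<in> Q"
    then have "x \<in> (\<lambda>x. x \<otimes> a) ` Q" using stab_surj[OF Qc a] by simp
    then obtain y where y: "y \<in> Q" "x = y \<otimes> a" by blast
    have yc: "y \<in> carrier G" using y Qc by auto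
    have "x \<otimes> inv a = y" using y yc ac by (simp add: m_assoc)
    then show "x \<otimes> inv a \<in> Q" using y by simp
  qed
  then show "inv a \<in> stab Q" unfolding stab_def using ac by simp
next
  fix a b assume a: "a \<in> stab Q" and b: "b \<in> stab Q"
  have ac: "a \<in> carrier G" and bc: "b \<in> carrier G" using a b unfolding stab_def by auto
  have "\<forall>x\<in>Q. x \<otimes> (a \<otimes> b) \<in> Q"
  proof
    fix x assume x: "x \<in> Q"
    then have xc: "x \<in> carrier G" using Qc by auto
    have "x \<otimes> a \<in> Q" using a x unfolding stab_def by auto
    then have "(x \<otimes> a) \<otimes> b \<in> Q" using b unfolding stab_def by auto
    then show "x \<otimes> (a \<otimes> b) \<in> Q" using xc ac bc by (simp add: m_assoc)
  qed
  then show "a \<otimes> b \<in> stab Q" unfolding stab_def using ac bc by simp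
qed

lemma rcos_stab:
  assumes Qc: "Q \<subseteq> carrier G" and zc: "z \<in> carrier G"
  shows "Q #> z = Q \<longleftrightarrow> z \<in> stab Q"
proof
  assume h: "Q #> z = Q"
  have "\<forall>x\<in>Q. x \<otimes> z \<in> Q"
  proof
    fix x assume "x \<in> Q" then have "x \<otimes> z \<in> Q #> z" unfolding r_coset_def by blast
    then show "x \<otimes> z \<in> Q" using h by simp
  qed
  then show "z \<in> stab Q" unfolding stab_def using zc by simp
next
  assume z: "z \<in> stab Q"
  have "Q #> z = (\<lambda>x. x \<otimes> z) ` Q" unfolding r_coset_def by auto
  then show "Q #> z = Q" using stab_surj[OF Qc z] by simp
qed

lemma lcos_rcos:
  assumes Qc: "Q \<subseteq> carrier G" and zc: "z \<in> carrier G"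
  shows "z <# Q = Q #> z"
proof -
  have "z <# Q = (\<lambda>x. z \<otimes> x) ` Q" unfolding l_coset_def by auto
  also have "\<dots> = (\<lambda>x. x \<otimes> z) ` Q" using Qc zc by (intro image_cong) (auto simp: m_comm)
  also have "\<dots> = Q #> z" unfolding r_coset_def by auto
  finally show ?thesis .
qed

lemma rad_stab:
  assumes Qc: "Q \<subseteq> carrier G" and Hc: "H \<subseteq> carrier G"
  shows "rad G H Q = H \<inter> stab Q"
proof (intro equalityI subsetI)
  fix z assume "z \<in> rad G H Q"
  then have "z \<in> H" "Q #> z = Q" unfolding rad_def by auto
  then show "z \<in> H \<inter> stab Q" using rcos_stab[OF Qc] Hc by blast
next
  fix z assume z: "z \<in> H \<inter> stab Q"
  then have zc: "z \<in> carrier G" using Hc by blast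
  have "Q #> z = Q" using rcos_stab[OF Qc zc] z by blast
  moreover have "z <# Q = Q" using calculation lcos_rcos[OF Qc zc] by simp
  ultimately show "z \<in> rad G H Q" unfolding rad_def using z by blast
qed

end



locale cyc = sr G S for G :: "('a,'b) monoid_scheme" (structure) and S +
  fixes gen :: 'a and p k :: nat
  assumes gen_c: "gen \<in> carrier G" and gen_g: "generate G {gen} = carrier G"
    and pr: "Factorial_Ring.prime p" and cardG: "card (carrier G) = p ^ k"
begin

lemma sub_pow: assumes H: "subgroup H G" and h: "h \<in> H" shows "h [^] (n::nat) \<in> H"
proof (induction n)
  case 0
  have "h [^] (0::nat) = \<one>" by (rule nat_pow_0)
  then show ?case using subgroup.one_closed[OF H] by simp
next
  case (Suc n)
  have "h [^] Suc n = h [^] n \<otimes> h" by (rule nat_pow_Suc)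
  then show ?case using subgroup.m_closed[OF H Suc.IH h] by simp
qed

lemma p_gt1: "p > 1" using pr by (rule prime_gt_1_nat)

lemma elem_pow: assumes "x \<in> carrier G" shows "\<exists>i::nat. x = gen [^] i"
proof -
  have "x \<in> generate G {gen}" using assms gen_g by simp
  then have "x \<in> { gen [^] k | k. k \<in> (UNIV :: nat set) }"
    using generate_pow_on_finite_carrier[OF finG gen_c] by simp
  then show ?thesis by blast
qed

lemma orderG: "order G = p ^ k" unfolding order_def by (rule cardG)

lemma dvd_pp: assumes a: "a dvd p ^ k" and b: "b dvd p ^ k" and ab: "a \<le> b" shows "a dvd b"
proof -
  obtain s where s: "a = p ^ s" using a divides_primepow_nat[OF pr] by blast
  obtain t where t: "b = p ^ t" using b divides_primepow_nat[OF pr] by blast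
  have "p ^ s \<le> p ^ t" using ab s t by simp
  then have "s \<le> t" by (rule power_le_imp_le_exp[OF p_gt1])
  then have "p ^ s dvd p ^ t" by (rule le_imp_power_dvd)
  then show "a dvd b" using s t by simp
qed

lemma gen_pow_gcd:
  assumes y: "y = gen [^] (j::nat)"
  shows "gen [^] (gcd (p^k) j) \<in> generate G {y}"
proof (cases "j = 0")
  case True
  then have "gen [^] (gcd (p^k) j) = \<one>" using pow_order_eq_1[OF gen_c] orderG by simp
  then show ?thesis using generate.one by metis
next
  case False
  obtain u v where uv: "j * u = p^k * v + gcd j (p^k)" using bezout_nat[OF False] by blast
  have yc: "y \<in> carrier G" using y gen_c by simp
  have "y [^] u = gen [^] (j * u)" using y gen_c by (simp add: nat_pow_pow)
  also have "\<dots> = gen [^] (p^k * v) \<otimes> gen [^] (gcd (p^k) j)" using uv gen_c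
    by (simp add: nat_pow_mult gcd.commute)
  also have "gen [^] (p^k * v) = \<one>" using gen_c pow_order_eq_1[OF gen_c] orderG
    by (metis nat_pow_one nat_pow_pow)
  finally have "y [^] u = gen [^] (gcd (p^k) j)" using gen_c by simp
  moreover have "y [^] u \<in> generate G {y}"
    using sub_pow[OF generate_is_subgroup generate.incl[of y "{y}"]] yc by auto
  ultimately show ?thesis by simp
qed

lemma chain_elem:
  assumes x: "x \<in> carrier G" and y: "y \<in> carrier G"
  and le: "gcd (p^k) j \<le> gcd (p^k) i" and xi: "x = gen [^] (i::nat)" and yj: "y = gen [^] (j::nat)"
  shows "generate G {x} \<subseteq> generate G {y}"
proof -
  have d: "gcd (p^k) j dvd i" using dvd_pp[OF _ _ le] by (meson dvd_trans gcd_dvd1 gcd_dvd2)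
  then obtain c where c: "i = gcd (p^k) j * c" by blast
  have "x = (gen [^] (gcd (p^k) j)) [^] c" using xi c gen_c by (simp add: nat_pow_pow)
  moreover have "(gen [^] (gcd (p^k) j)) [^] c \<in> generate G {y}"
    using sub_pow[OF generate_is_subgroup gen_pow_gcd[OF yj]] y by auto
  ultimately have "x \<in> generate G {y}" by simp
  then show ?thesis using generate_subgroup_incl[OF _ generate_is_subgroup] y by auto
qed

lemma chain:
  assumes x: "x \<in> carrier G" and y: "y \<in> carrier G"
  shows "generate G {x} \<subseteq> generate G {y} \<or> generate G {y} \<subseteq> generate G {x}"
proof -
  obtain i where i: "x = gen [^] (i::nat)" using elem_pow x by blast
  obtain j where j: "y = gen [^] (j::nat)" using elem_pow y by blast
  show ?thesis
  proof (cases "gcd (p^k) j \<le> gcd (p^k) i")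
    case True then show ?thesis using chain_elem[OF x y True i j] by blast
  next
    case False then have "gcd (p^k) i \<le> gcd (p^k) j" by simp
    then show ?thesis using chain_elem[OF y x _ j i] by blast
  qed
qed

lemma gen_sub: "subgroup H G \<Longrightarrow> h \<in> H \<Longrightarrow> generate G {h} \<subseteq> H"
  using generate_subgroup_incl by blast

lemma subgroup_cyclic:
  assumes H: "subgroup H G"
  shows "\<exists>h\<in>H. generate G {h} = H"
proof -
  have Hc: "H \<subseteq> carrier G" using H subgroup.subset by blast
  have fH: "finite H" using Hc finG finite_subset by blast
  have ne: "H \<noteq> {}" using H subgroup.one_closed by blast
  define F where "F = (\<lambda>h. card (generate G {h})) ` H"
  have fF: "finite F" "F \<noteq> {}" unfolding F_def using fH ne by auto
  then have "Max F \<in> F" by (rule Max_in)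
  then obtain h where h: "h \<in> H" "card (generate G {h}) = Max F" unfolding F_def by auto
  have "H \<subseteq> generate G {h}"
  proof
    fix y assume y: "y \<in> H"
    have yc: "y \<in> carrier G" and hc: "h \<in> carrier G" using y h Hc by auto
    have "generate G {y} \<subseteq> generate G {h}"
    proof (cases "generate G {y} \<subseteq> generate G {h}")
      case False
      then have sub: "generate G {h} \<subseteq> generate G {y}" using chain[OF yc hc] by blast
      have "card (generate G {y}) \<le> Max F" using Max_ge[OF fF(1)] y unfolding F_def by auto
      moreover have fy: "finite (generate G {y})" using gen_sub[OF H y] fH finite_subset by blast
      ultimately have "generate G {h} = generate G {y}" using card_subset_eq[OF fy sub] h(2)
        card_mono[OF fy sub] by linarith
      then show ?thesis by simp
    qed simp
    then show "y \<in> generate G {h}" using generate.incl[of y "{y}"] by blast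
  qed
  then show ?thesis using gen_sub[OF H h(1)] h(1) by blast
qed

lemma subgroup_chain:
  assumes "subgroup H1 G" "subgroup H2 G"
  shows "H1 \<subseteq> H2 \<or> H2 \<subseteq> H1"
proof -
  obtain h1 where "h1 \<in> H1" "generate G {h1} = H1" using subgroup_cyclic assms(1) by blast
  moreover obtain h2 where "h2 \<in> H2" "generate G {h2} = H2" using subgroup_cyclic assms(2) by blast
  ultimately show ?thesis using chain assms subgroup.mem_carrier by metis
qed

lemma nongen_mult:
  assumes H: "subgroup H G" and x: "x \<in> H" and y: "y \<in> H"
    and nx: "generate G {x} \<noteq> H" and ny: "generate G {y} \<noteq> H"
  shows "generate G {x \<otimes> y} \<noteq> H"
proof
  assume e: "generate G {x \<otimes> y} = H"
  have xc: "x \<in> carrier G" using subgroup.mem_carrier[OF H x] .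
  have yc: "y \<in> carrier G" using subgroup.mem_carrier[OF H y] .
  have sx: "subgroup (generate G {x}) G" and sy: "subgroup (generate G {y}) G"
    using xc yc generate_is_subgroup by auto
  have xx: "x \<in> generate G {x}" by (rule generate.incl) simp
  have yy: "y \<in> generate G {y}" by (rule generate.incl) simp
  show False
  proof (cases "generate G {x} \<subseteq> generate G {y}")
    case True
    then have "x \<otimes> y \<in> generate G {y}" using xx yy subgroup.m_closed[OF sy] by blast
    then have "H \<subseteq> generate G {y}" using e gen_sub[OF sy] by blast
    then show False using ny gen_sub[OF H y] by blast
  next
    case False
    then have "generate G {y} \<subseteq> generate G {x}" using chain[OF xc yc] by blast
    then have "x \<otimes> y \<in> generate G {x}" using xx yy subgroup.m_closed[OF sx] by blast
    then have "H \<subseteq> generate G {x}" using e gen_sub[OF sx] by blast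
    then show False using nx gen_sub[OF H x] by blast
  qed
qed

lemma one_nongen:
  assumes "H \<noteq> {\<one>}" shows "generate G {\<one>} \<noteq> H"
proof -
  have "generate G {\<one>} = {\<one>}" using generate_pow_on_finite_carrier[OF finG one_closed] by auto
  then show ?thesis using assms by simp
qed

lemma gens_pow:
  assumes H: "subgroup H G" and Hne: "H \<noteq> {\<one>}" and x: "x \<in> H" "generate G {x} = H"
    and y: "y \<in> H" "generate G {y} = H"
  shows "\<exists>m. m > 0 \<and> coprime m (p ^ k) \<and> y = x [^] (m::nat)"
proof -
  have xc: "x \<in> carrier G" using subgroup.mem_carrier[OF H x(1)] .
  have yc: "y \<in> carrier G" using subgroup.mem_carrier[OF H y(1)] .
  have "y \<in> generate G {x}" using x(2) y(1) by simp
  then have "y \<in> { x [^] k | k. k \<in> (UNIV :: nat set) }"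
    using generate_pow_on_finite_carrier[OF finG xc] by simp
  then obtain m where m: "y = x [^] (m::nat)" by blast
  have ox: "ord x = card H" using generate_pow_card[OF xc] x(2) by simp
  have oy: "ord y = card H" using generate_pow_card[OF yc] y(2) by simp
  have "ord (x [^] m) = ord x" using ox oy m by simp
  then have cm: "coprime m (ord x)" using pow_ord_eq_ord_iff[OF finG xc, of m] by blast
  have "card H dvd order G" using lagrange_finite[OF finG H] by (metis dvd_triv_right)
  then have "card H dvd p ^ k" using orderG by simp
  then obtain j where j: "card H = p ^ j" using divides_primepow_nat[OF pr] by blast
  have "j \<noteq> 0"
  proof
    assume "j = 0"
    then have "card H = 1" using j by simp
    then obtain a where a: "H = {a}" by (rule card_1_singletonE)
    have "\<one> \<in> H" using subgroup.one_closed[OF H] .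
    then show False using Hne a by blast
  qed
  then have "p dvd ord x" using ox j by simp
  then have "coprime m p" using cm coprime_imp_coprime dvd_trans by (metis coprime_commute coprime_divisors dvd_refl)
  then have cp: "coprime m (p ^ k)" by simp
  have "m \<noteq> 0"
  proof
    assume "m = 0" then have "y = \<one>" using m by simp
    then show False using y(2) one_nongen[OF Hne] by simp
  qed
  then show ?thesis using cp m by blast
qed

end



lemma rot_mult: "rotate (d * u) m = m" if "rotate d m = m" for d u :: nat and m :: "'x list"
proof (induction u)
  case 0 then show ?case by simp
next
  case (Suc u)
  have "rotate (d * Suc u) m = rotate d (rotate (d * u) m)" by (simp add: rotate_rotate add.commute)
  also have "\<dots> = m" using Suc.IH that by simp
  finally show ?case .
qed

lemma rot_period:
  fixes m :: "'x list"
  assumes q: "Factorial_Ring.prime q" and len: "length m = q" and d: "0 < d" "d < q" and r: "rotate d m = m"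
  shows "rotate1 m = m"
proof -
  have "coprime d q"
  proof -
    have "\<not> q dvd d" using d by (auto dest: dvd_imp_le)
    then have "coprime q d" using q prime_imp_coprime by blast
    then show ?thesis by (simp add: coprime_commute)
  qed
  then have g: "gcd d q = 1" by simp
  obtain u v where uv: "d * u = q * v + gcd d q" using bezout_nat[of d q] d by auto
  have "rotate (d * u) m = m" using rot_mult[OF r] .
  moreover have "rotate (d * u) m = rotate 1 (rotate (q * v) m)" using uv g by (simp add: rotate_rotate)
  moreover have "rotate (q * v) m = m" using len by simp
  ultimately show ?thesis by simp
qed

lemma necklace:
  fixes T :: "'x list set"
  assumes q: "Factorial_Ring.prime q"
  shows "finite T \<Longrightarrow> (\<forall>l\<in>T. length l = q) \<Longrightarrow> (\<forall>l\<in>T. rotate1 l \<in> T) \<Longrightarrow> (\<forall>l\<in>T. rotate1 l \<noteq> l)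
    \<Longrightarrow> q dvd card T"
proof (induction "card T" arbitrary: T rule: less_induct)
  case less
  show ?case
  proof (cases "T = {}")
    case True then show ?thesis by simp
  next
    case False
    then obtain l where l: "l \<in> T" by blast
    define Orb where "Orb = (\<lambda>i. rotate i l) ` {..<q}"
    have rotT: "rotate i l \<in> T" for i
    proof (induction i)
      case 0 then show ?case using l by simp
    next
      case (Suc i) then show ?case using less.prems(3) by simp
    qed
    have OrbT: "Orb \<subseteq> T" unfolding Orb_def using rotT by blast
    have lenl: "length l = q" using less.prems(2) l by blast
    have inj: "inj_on (\<lambda>i. rotate i l) {..<q}"
    proof (rule inj_onI, rule ccontr)
      fix i j assume i: "i \<in> {..<q}" and j: "j \<in> {..<q}" and e: "rotate i l = rotate j l" and ne: "i \<noteq> j"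
      have "\<exists>a b. a < b \<and> b < q \<and> rotate a l = rotate b l"
      proof (cases "i < j")
        case True then show ?thesis using i j e by blast
      next
        case False then have "j < i" using ne by simp
        then show ?thesis using i j e by (metis lessThan_iff)
      qed
      then obtain a b where ab: "a < b" "b < q" "rotate a l = rotate b l" by blast
      define m where "m = rotate a l"
      have "rotate (b - a) m = rotate b l" unfolding m_def rotate_rotate using ab(1) by simp
      then have "rotate (b - a) m = m" using ab unfolding m_def by simp
      moreover have "length m = q" unfolding m_def using lenl by simp
      moreover have "0 < b - a" "b - a < q" using ab by auto
      ultimately have "rotate1 m = m" using rot_period[OF q] by blast
      moreover have "m \<in> T" unfolding m_def using rotT by blast
      ultimately show False using less.prems(4) by blast
    qed
    have cOrb: "card Orb = q" unfolding Orb_def using card_image[OF inj] by simp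
    define T' where "T' = T - Orb"
    have fT': "finite T'" unfolding T'_def using less.prems(1) by simp
    have fO: "finite Orb" using finite_subset[OF OrbT less.prems(1)] .
    have c1: "card T' = card T - card Orb" unfolding T'_def by (rule card_Diff_subset[OF fO OrbT])
    have c2: "card Orb \<le> card T" by (rule card_mono[OF less.prems(1) OrbT])
    have cT: "card T = q + card T'" using c1 c2 cOrb by simp
    have qpos: "q > 0" using q prime_gt_0_nat by blast
    have "q dvd card T'"
    proof (rule less.hyps)
      show "card T' < card T" using cT qpos by simp
      show "finite T'" by (rule fT')
      show "\<forall>l\<in>T'. length l = q" using less.prems(2) unfolding T'_def by blast
      show "\<forall>l\<in>T'. rotate1 l \<noteq> l" using less.prems(4) unfolding T'_def by blast
      show "\<forall>l'\<in>T'. rotate1 l' \<in> T'"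
      proof
        fix l' assume l': "l' \<in> T'"
        then have l'T: "l' \<in> T" and l'Orb: "l' \<notin> Orb" unfolding T'_def by auto
        have "rotate1 l' \<notin> Orb"
        proof
          assume "rotate1 l' \<in> Orb"
          then obtain i where i: "i < q" "rotate1 l' = rotate i l" unfolding Orb_def by blast
          have len': "length l' = q" using less.prems(2) l'T by blast
          have r1: "rotate1 l' = rotate 1 l'" by simp
          have "rotate (q - 1) (rotate1 l') = rotate (q - 1 + 1) l'" unfolding r1 rotate_rotate ..
          also have "q - 1 + 1 = q" using qpos by simp
          finally have "rotate (q - 1) (rotate1 l') = rotate q l'" .
          also have "\<dots> = l'" using len' by simp
          finally have "l' = rotate (q - 1) (rotate i l)" using i by simp
          also have "\<dots> = rotate (q - 1 + i) l" by (rule rotate_rotate)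
          also have "\<dots> = rotate ((q - 1 + i) mod length l) l" by (rule rotate_conv_mod)
          also have "\<dots> = rotate ((q - 1 + i) mod q) l" using lenl by simp
          finally have "l' \<in> Orb" unfolding Orb_def using qpos by simp
          then show False using l'Orb by blast
        qed
        then show "rotate1 l' \<in> T'" unfolding T'_def using less.prems(3) l'T by blast
      qed
    qed
    then show ?thesis using cT by simp
  qed
qed




primrec prodl :: "('a,'b) monoid_scheme \<Rightarrow> 'a list \<Rightarrow> 'a" where
  "prodl G [] = \<one>\<^bsub>G\<^esub>"
| "prodl G (a # l) = a \<otimes>\<^bsub>G\<^esub> prodl G l"

primrec cpow :: "('a,'b) monoid_scheme \<Rightarrow> ('a \<Rightarrow> int) \<Rightarrow> nat \<Rightarrow> 'a \<Rightarrow> int" where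
  "cpow G f 0 = set_elem {\<one>\<^bsub>G\<^esub>}"
| "cpow G f (Suc n) = gr_mult G f (cpow G f n)"

context sr begin

lemma prodl_closed: "set l \<subseteq> carrier G \<Longrightarrow> prodl G l \<in> carrier G"
  by (induction l) auto

lemma prodl_append: "set l \<subseteq> carrier G \<Longrightarrow> b \<in> carrier G \<Longrightarrow> prodl G (l @ [b]) = prodl G l \<otimes> b"
proof (induction l)
  case Nil then show ?case by simp
next
  case (Cons a l)
  then have ac: "a \<in> carrier G" and lc: "set l \<subseteq> carrier G" by auto
  have "prodl G ((a # l) @ [b]) = a \<otimes> (prodl G l \<otimes> b)" using Cons.IH[OF lc Cons.prems(2)] by simp
  also have "\<dots> = (a \<otimes> prodl G l) \<otimes> b" using ac prodl_closed[OF lc] Cons.prems(2) by (simp add: m_assoc)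
  finally show ?case by simp
qed

lemma prodl_rotate1: "set l \<subseteq> carrier G \<Longrightarrow> prodl G (rotate1 l) = prodl G l"
proof (cases l)
  case Nil then show ?thesis by simp
next
  case (Cons a t)
  assume lc: "set l \<subseteq> carrier G"
  then have ac: "a \<in> carrier G" and tc: "set t \<subseteq> carrier G" using Cons by auto
  have "prodl G (rotate1 l) = prodl G t \<otimes> a" using Cons prodl_append[OF tc ac] by simp
  also have "\<dots> = a \<otimes> prodl G t" using ac prodl_closed[OF tc] by (simp add: m_comm)
  finally show ?thesis using Cons by simp
qed

lemma prodl_replicate: "a \<in> carrier G \<Longrightarrow> prodl G (replicate n a) = a [^] n"
proof (induction n)
  case 0 then show ?case by simp
next
  case (Suc n)
  then have "prodl G (replicate (Suc n) a) = a \<otimes> a [^] n" by simp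
  also have "\<dots> = a [^] n \<otimes> a" using Suc.prems by (simp add: m_comm)
  finally show ?case by simp
qed

lemma cpow_zspan: "f \<in> zspan S \<Longrightarrow> cpow G f n \<in> zspan S"
proof (induction n)
  case 0
  have "A_set G S {\<one>}" using Aset_basic[OF S_one] .
  then show ?case unfolding A_set_def by simp
next
  case (Suc n) then show ?case using S_mult by simp
qed

definition tup :: "'a set \<Rightarrow> nat \<Rightarrow> 'a \<Rightarrow> 'a list set" where
  "tup Y j z = {l. length l = j \<and> set l \<subseteq> Y \<and> prodl G l = z}"

lemma tup_finite: "Y \<subseteq> carrier G \<Longrightarrow> finite (tup Y j z)"
proof -
  assume "Y \<subseteq> carrier G"
  then have fY: "finite Y" using finG finite_subset by blast
  have "tup Y j z \<subseteq> {xs. set xs \<subseteq> Y \<and> length xs = j}" unfolding tup_def by blast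
  then show ?thesis using finite_lists_length_eq[OF fY] finite_subset by blast
qed

lemma tup_Suc:
  assumes Yc: "Y \<subseteq> carrier G" and zc: "z \<in> carrier G"
  shows "tup Y (Suc j) z = (\<Union>x\<in>Y. (\<lambda>l. x # l) ` tup Y j (inv x \<otimes> z))"
proof (intro equalityI subsetI)
  fix l assume "l \<in> tup Y (Suc j) z"
  then have l: "length l = Suc j" "set l \<subseteq> Y" "prodl G l = z" unfolding tup_def by auto
  then obtain x t where xt: "l = x # t" by (metis length_Suc_conv)
  have xY: "x \<in> Y" and tY: "set t \<subseteq> Y" using l(2) xt by auto
  have xc: "x \<in> carrier G" using xY Yc by auto
  have tc: "prodl G t \<in> carrier G" using prodl_closed tY Yc by blast
  have e: "x \<otimes> prodl G t = z" using l(3) xt by simp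
  have "prodl G t = inv x \<otimes> (x \<otimes> prodl G t)" using xc tc by (simp add: m_assoc[symmetric])
  then have "prodl G t = inv x \<otimes> z" using e by simp
  then have "t \<in> tup Y j (inv x \<otimes> z)" unfolding tup_def using l(1) tY xt by simp
  then have "l \<in> (\<lambda>l. x # l) ` tup Y j (inv x \<otimes> z)" using xt by simp
  then show "l \<in> (\<Union>x\<in>Y. (\<lambda>l. x # l) ` tup Y j (inv x \<otimes> z))" using xY by (rule UN_I[rotated])
next
  fix l assume "l \<in> (\<Union>x\<in>Y. (\<lambda>l. x # l) ` tup Y j (inv x \<otimes> z))"
  then obtain x t where xt: "x \<in> Y" "l = x # t" "t \<in> tup Y j (inv x \<otimes> z)" by blast
  have xc: "x \<in> carrier G" using xt Yc by auto
  have t: "length t = j" "set t \<subseteq> Y" "prodl G t = inv x \<otimes> z" using xt(3) unfolding tup_def by auto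
  have "prodl G l = x \<otimes> (inv x \<otimes> z)" using xt(2) t(3) by simp
  also have "\<dots> = z" using xc zc by (simp add: m_assoc[symmetric])
  finally show "l \<in> tup Y (Suc j) z" unfolding tup_def using t xt by simp
qed

lemma cpow_count:
  assumes Yc: "Y \<subseteq> carrier G"
  shows "z \<in> carrier G \<Longrightarrow> cpow G (set_elem Y) j z = int (card (tup Y j z))"
proof (induction j arbitrary: z)
  case 0
  have "tup Y 0 z = (if z = \<one> then {[]} else {})" unfolding tup_def by auto
  then show ?case by (simp add: set_elem_def)
next
  case (Suc j)
  have fY: "finite Y" using Yc finG finite_subset by blast
  have "cpow G (set_elem Y) (Suc j) z = (\<Sum>x\<in>Y. cpow G (set_elem Y) j (inv x \<otimes> z))"
    using gr_mult_set[OF Yc Suc.prems] by simp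
  also have "\<dots> = (\<Sum>x\<in>Y. int (card (tup Y j (inv x \<otimes> z))))"
  proof (rule sum.cong[OF refl])
    fix x assume "x \<in> Y" then have "inv x \<otimes> z \<in> carrier G" using Yc Suc.prems by auto
    then show "cpow G (set_elem Y) j (inv x \<otimes> z) = int (card (tup Y j (inv x \<otimes> z)))" by (rule Suc.IH)
  qed
  also have "\<dots> = int (\<Sum>x\<in>Y. card ((\<lambda>l. x # l) ` tup Y j (inv x \<otimes> z)))"
    by (simp add: card_image)
  also have "(\<Sum>x\<in>Y. card ((\<lambda>l. x # l) ` tup Y j (inv x \<otimes> z))) = card (\<Union>x\<in>Y. (\<lambda>l. x # l) ` tup Y j (inv x \<otimes> z))"
    by (rule card_UN_disjoint[symmetric]) (use fY tup_finite[OF Yc] in auto)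
  also have "\<dots> = card (tup Y (Suc j) z)" using tup_Suc[OF Yc Suc.prems] by simp
  finally show ?case .
qed

end



context cyc begin

lemma pow_inj:
  assumes q: "coprime q (p ^ k)" and a: "a \<in> carrier G" and b: "b \<in> carrier G"
    and e: "a [^] (q::nat) = b [^] q"
  shows "a = b"
proof -
  define c where "c = a \<otimes> inv b"
  have cc: "c \<in> carrier G" unfolding c_def using a b by simp
  have "c [^] q = a [^] q \<otimes> (inv b) [^] q" unfolding c_def using a b by (simp add: nat_pow_distrib)
  also have "(inv b) [^] q = inv (b [^] q)" using b by (simp add: nat_pow_inv)
  also have "a [^] q \<otimes> inv (b [^] q) = \<one>" using e b by simp
  finally have "c [^] q = \<one>" .
  then have d1: "ord c dvd q" using pow_eq_id[OF cc] by simp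
  have d2: "ord c dvd p ^ k" using ord_dvd_group_order[OF cc] orderG by simp
  have "ord c dvd gcd q (p ^ k)" by (rule gcd_greatest[OF d1 d2])
  moreover have "gcd q (p ^ k) = 1" using q by simp
  ultimately have "ord c = 1" by simp
  then have c1: "c = \<one>" using ord_eq_1[OF cc] by simp
  have "a = (a \<otimes> inv b) \<otimes> b" using a b by (simp add: m_assoc)
  also have "\<dots> = b" using c1 b unfolding c_def by simp
  finally show ?thesis .
qed

lemma rot_fix_nth:
  assumes r1: "rotate1 l = l" and i: "i < length l"
  shows "l ! i = l ! 0"
proof -
  have r: "rotate n l = l" for n
  proof (induction n)
    case 0 show ?case by simp
  next
    case (Suc n)
    have "rotate (Suc n) l = rotate1 (rotate n l)" by (rule rotate_Suc)
    also have "\<dots> = rotate1 l" using Suc.IH by (rule arg_cong)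
    also have "\<dots> = l" by (rule r1)
    finally show ?case .
  qed
  have pos: "0 < length l" using i by linarith
  have "rotate i l ! 0 = l ! ((i + 0) mod length l)" by (rule nth_rotate[OF pos])
  moreover have "(i + 0) mod length l = i" using i by simp
  ultimately have "rotate i l ! 0 = l ! i" by simp
  then show ?thesis using r[of i] by simp
qed

lemma card_tup_mod:
  assumes q: "Factorial_Ring.prime q" and Yc: "Y \<subseteq> carrier G" and zc: "z \<in> carrier G"
  shows "card (tup Y q z) mod q = card {a\<in>Y. a [^] q = z} mod q"
proof -
  define T where "T = tup Y q z"
  define F where "F = {l\<in>T. rotate1 l = l}"
  have fT: "finite T" unfolding T_def using tup_finite[OF Yc] .
  have qpos: "q > 0" using q prime_gt_0_nat by blast
  have Tlen: "\<forall>l\<in>T. length l = q" unfolding T_def tup_def by simp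
  have Trot: "rotate1 l \<in> T" if "l \<in> T" for l
  proof -
    have "set l \<subseteq> carrier G" using that Yc unfolding T_def tup_def by auto
    then show ?thesis using that prodl_rotate1 unfolding T_def tup_def by simp
  qed
  have dv: "q dvd card (T - F)"
  proof (rule necklace[OF q])
    show "finite (T - F)" using fT by simp
    show "\<forall>l\<in>T - F. length l = q" using Tlen by blast
    show "\<forall>l\<in>T - F. rotate1 l \<noteq> l" unfolding F_def by blast
    show "\<forall>l\<in>T - F. rotate1 l \<in> T - F"
    proof
      fix l assume l: "l \<in> T - F"
      have "rotate1 (rotate1 l) \<noteq> rotate1 l"
      proof
        assume "rotate1 (rotate1 l) = rotate1 l"
        then have "rotate1 l = l" using injD[OF inj_rotate1] by blast
        then show False using l unfolding F_def by blast
      qed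
      then show "rotate1 l \<in> T - F" using Trot l unfolding F_def by blast
    qed
  qed
  have cT: "card T = card F + card (T - F)"
  proof -
    have FT: "F \<subseteq> T" unfolding F_def by blast
    have "card (T - F) = card T - card F" by (rule card_Diff_subset[OF finite_subset[OF FT fT] FT])
    moreover have "card F \<le> card T" by (rule card_mono[OF fT FT])
    ultimately show ?thesis by simp
  qed
  have Feq: "F = (\<lambda>a. replicate q a) ` {a\<in>Y. a [^] q = z}"
  proof (intro equalityI subsetI)
    fix l assume l: "l \<in> F"
    then have lT: "l \<in> T" and r: "rotate1 l = l" unfolding F_def by auto
    have len: "length l = q" using Tlen lT by blast
    have lrep: "l = replicate q (l ! 0)"
    proof (rule nth_equalityI)
      show "length l = length (replicate q (l ! 0))" using len by simp
      fix i assume il: "i < length l"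
      have "l ! i = l ! 0" using rot_fix_nth[OF r il] .
      moreover have "replicate q (l ! 0) ! i = l ! 0" using il len by simp
      ultimately show "l ! i = replicate q (l ! 0) ! i" by simp
    qed
    have "l ! 0 \<in> set l" using len qpos by (intro nth_mem) simp
    then have aY: "l ! 0 \<in> Y" using lT unfolding T_def tup_def by auto
    then have ac: "l ! 0 \<in> carrier G" using Yc by auto
    have "prodl G l = z" using lT unfolding T_def tup_def by simp
    then have "prodl G (replicate q (l ! 0)) = z" using lrep by metis
    then have "(l ! 0) [^] q = z" using prodl_replicate[OF ac, of q] by simp
    then have "l ! 0 \<in> {a\<in>Y. a [^] q = z}" using aY by simp
    then show "l \<in> (\<lambda>a. replicate q a) ` {a\<in>Y. a [^] q = z}" using lrep by (metis image_eqI)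
  next
    fix l assume "l \<in> (\<lambda>a. replicate q a) ` {a\<in>Y. a [^] q = z}"
    then obtain a where a: "a \<in> Y" "a [^] q = z" "l = replicate q a" by blast
    have ac: "a \<in> carrier G" using a Yc by auto
    have "set l \<subseteq> Y" using a(1,3) by (simp add: set_replicate_conv_if)
    moreover have "prodl G l = z" using a(2,3) prodl_replicate[OF ac] by simp
    ultimately have "l \<in> T" unfolding T_def tup_def using a(3) by simp
    then show "l \<in> F" unfolding F_def using a by simp
  qed
  have inj: "inj_on (\<lambda>a. replicate q a) {a\<in>Y. a [^] q = z}"
    using qpos by (intro inj_onI) simp
  have cF: "card F = card {a\<in>Y. a [^] q = z}" unfolding Feq using card_image[OF inj] .
  obtain c where c: "card (T - F) = q * c" using dv by blast
  have "card T mod q = card F mod q" using cT c by simp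
  then show ?thesis unfolding T_def cF[symmetric] by simp
qed

end



context cyc begin

abbreviation pw :: "nat \<Rightarrow> 'a set \<Rightarrow> 'a set" where
  "pw m Y \<equiv> (\<lambda>x. x [^] m) ` Y"

lemma Aset_pow_prime:
  assumes q: "Factorial_Ring.prime q" and cq: "coprime q (p ^ k)" and Y: "A_set G S Y"
  shows "A_set G S (pw q Y)"
proof -
  have Yc: "Y \<subseteq> carrier G" using Y unfolding A_set_def by simp
  define f where "f = cpow G (set_elem Y) q"
  have fz: "f \<in> zspan S" unfolding f_def using cpow_zspan Y unfolding A_set_def by blast
  have q1: "q > 1" using q prime_gt_1_nat by blast
  have eq: "pw q Y = {z \<in> carrier G. f z mod int q \<noteq> 0}"
  proof (intro equalityI subsetI)
    fix z assume "z \<in> pw q Y"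
    then obtain a where a: "a \<in> Y" "z = a [^] q" by blast
    have ac: "a \<in> carrier G" using a Yc by auto
    have zc: "z \<in> carrier G" using a ac by simp
    have "{b\<in>Y. b [^] q = z} = {a}"
    proof (intro equalityI subsetI)
      fix b assume b: "b \<in> {b\<in>Y. b [^] q = z}"
      then have bc: "b \<in> carrier G" using Yc by auto
      have "b = a" using pow_inj[OF cq bc ac] b a by simp
      then show "b \<in> {a}" by simp
    next
      fix b assume "b \<in> {a}" then show "b \<in> {b\<in>Y. b [^] q = z}" using a by simp
    qed
    then have "card {b\<in>Y. b [^] q = z} = 1" by simp
    then have "card (tup Y q z) mod q = 1" using card_tup_mod[OF q Yc zc] q1 by simp
    then have "f z mod int q = 1" unfolding f_def using cpow_count[OF Yc zc] by (simp add: zmod_int[symmetric])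
    then show "z \<in> {z \<in> carrier G. f z mod int q \<noteq> 0}" using zc by simp
  next
    fix z assume z: "z \<in> {z \<in> carrier G. f z mod int q \<noteq> 0}"
    then have zc: "z \<in> carrier G" by simp
    have "card (tup Y q z) mod q \<noteq> 0" using z unfolding f_def using cpow_count[OF Yc zc]
      by (simp add: zmod_int[symmetric])
    then have "card {b\<in>Y. b [^] q = z} mod q \<noteq> 0" using card_tup_mod[OF q Yc zc] by simp
    then have "{b\<in>Y. b [^] q = z} \<noteq> {}" by (metis card.empty mod_0)
    then show "z \<in> pw q Y" by blast
  qed
  show ?thesis unfolding eq by (rule Aset_level[OF fz])
qed

lemma Aset_pow:
  shows "0 < m \<Longrightarrow> coprime m (p ^ k) \<Longrightarrow> A_set G S Y \<Longrightarrow> A_set G S (pw m Y)"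
proof (induction m arbitrary: Y rule: less_induct)
  case (less m)
  have Yc: "Y \<subseteq> carrier G" using less.prems(3) unfolding A_set_def by simp
  show ?case
  proof (cases "m = 1")
    case True
    have "pw m Y = (\<lambda>x. x) ` Y" using True Yc by (intro image_cong) auto
    then have "pw m Y = Y" by simp
    then show ?thesis using less.prems(3) by simp
  next
    case False
    obtain q where q: "Factorial_Ring.prime q" "q dvd m" using prime_factor_nat[OF False] by blast
    then obtain m' where m': "m = q * m'" by blast
    have m'pos: "0 < m'" using m' less.prems(1) by (metis gr0I mult_0_right)
    have q1: "q > 1" using q prime_gt_1_nat by blast
    have m'lt: "m' < m" unfolding m' using m'pos q1 by simp
    have cqm: "coprime (q * m') (p ^ k)" using less.prems(2) m' by simp
    have cq: "coprime q (p ^ k)" using cqm by (rule coprime_mult_left_iff[THEN iffD1, THEN conjunct1])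
    have cm': "coprime m' (p ^ k)" using cqm by (rule coprime_mult_left_iff[THEN iffD1, THEN conjunct2])
    have A1: "A_set G S (pw m' Y)" using less.IH[OF m'lt m'pos cm' less.prems(3)] .
    have A2: "A_set G S (pw q (pw m' Y))" using Aset_pow_prime[OF q(1) cq A1] .
    have "pw q (pw m' Y) = pw m Y"
    proof -
      have "pw q (pw m' Y) = (\<lambda>x. (x [^] m') [^] q) ` Y" by (simp add: image_image)
      also have "\<dots> = pw m Y"
      proof (rule image_cong[OF refl])
        fix x assume "x \<in> Y" then have "x \<in> carrier G" using Yc by auto
        then have "(x [^] m') [^] q = x [^] (m' * q)" by (rule nat_pow_pow)
        also have "m' * q = m" using m' by simp
        finally show "(x [^] m') [^] q = x [^] m" .
      qed
      finally show ?thesis .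
    qed
    then show ?thesis using A2 by simp
  qed
qed

lemma pow_inverse:
  assumes m: "0 < m" and cm: "coprime m (p ^ k)"
  shows "\<exists>u. 0 < u \<and> coprime u (p ^ k) \<and> (\<forall>x\<in>carrier G. (x [^] m) [^] u = x)"
proof -
  have "m \<noteq> 0" using m by simp
  then obtain u v where uv: "m * u = p ^ k * v + gcd m (p ^ k)" using bezout_nat by blast
  have g: "gcd m (p ^ k) = 1" using cm by simp
  have inv: "(x [^] m) [^] u = x" if x: "x \<in> carrier G" for x
  proof -
    have "(x [^] m) [^] u = x [^] (p ^ k * v + 1)" using x uv g by (simp add: nat_pow_pow)
    also have "\<dots> = x [^] (p ^ k * v) \<otimes> x [^] (1::nat)" using x by (simp add: nat_pow_mult)
    also have "x [^] (p ^ k * v) = \<one>" using x pow_order_eq_1[OF x] orderG by (metis nat_pow_one nat_pow_pow)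
    finally show ?thesis using x by simp
  qed
  have upos: "0 < u"
  proof (rule ccontr)
    assume "\<not> 0 < u" then have "u = 0" by simp
    then show False using uv g by simp
  qed
  have cu: "coprime u (p ^ k)"
  proof (rule coprimeI)
    fix d assume d1: "d dvd u" and d2: "d dvd p ^ k"
    have "d dvd m * u" using d1 by simp
    moreover have "d dvd p ^ k * v" using d2 by simp
    ultimately have "d dvd 1" using uv g by (metis dvd_add_right_iff)
    then show "is_unit d" by simp
  qed
  show ?thesis using upos cu inv by blast
qed

lemma basic_pow:
  assumes Y: "Y \<in> S" and m: "0 < m" and cm: "coprime m (p ^ k)"
  shows "pw m Y \<in> S"
proof -
  have Yc: "Y \<subseteq> carrier G" using S_sub[OF Y] .
  obtain u where u: "0 < u" "coprime u (p ^ k)" "\<forall>x\<in>carrier G. (x [^] m) [^] u = x"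
    using pow_inverse[OF m cm] by blast
  have AY: "A_set G S (pw m Y)" using Aset_pow[OF m cm Aset_basic[OF Y]] .
  obtain y where y: "y \<in> Y" using S_ne[OF Y] by blast
  have yc: "y \<in> carrier G" using y Yc by auto
  have ymc: "y [^] m \<in> carrier G" using yc by simp
  obtain A where A: "A \<in> S" "y [^] m \<in> A" using S_cover[OF ymc] by blast
  have AsubY: "A \<subseteq> pw m Y" using Aset_basic_sub[OF AY A(1) A(2)] y by blast
  have Ac: "A \<subseteq> carrier G" using S_sub[OF A(1)] .
  have AU: "A_set G S (pw u A)" using Aset_pow[OF u(1) u(2) Aset_basic[OF A(1)]] .
  have "(y [^] m) [^] u = y" using u(3) yc by blast
  then have "y \<in> pw u A" using A(2) by (metis image_eqI)
  then have YsubU: "Y \<subseteq> pw u A" using Aset_basic_sub[OF AU Y y] by blast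
  have "pw u A \<subseteq> Y"
  proof
    fix w assume "w \<in> pw u A"
    then obtain a where a: "a \<in> A" "w = a [^] u" by blast
    then obtain b where b: "b \<in> Y" "a = b [^] m" using AsubY by blast
    have bc: "b \<in> carrier G" using b Yc by auto
    have "w = b" using a b u(3) bc by simp
    then show "w \<in> Y" using b by simp
  qed
  then have "pw u A = Y" using YsubU by blast
  have "pw m Y \<subseteq> A"
  proof
    fix w assume "w \<in> pw m Y"
    then obtain b where b: "b \<in> Y" "w = b [^] m" by blast
    then obtain a where a: "a \<in> A" "b = a [^] u" using YsubU by blast
    have ac: "a \<in> carrier G" using a Ac by auto
    have "w = (a [^] u) [^] m" using a b by simp
    also have "\<dots> = (a [^] m) [^] u" using ac by (simp add: nat_pow_pow mult.commute)
    also have "\<dots> = a" using u(3) ac by simp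
    finally show "w \<in> A" using a by simp
  qed
  then have "pw m Y = A" using AsubY by blast
  then show ?thesis using A(1) by simp
qed

end



context cyc begin

lemma stab_transfer:
  assumes H: "subgroup H G" and Hne: "H \<noteq> {\<one>}"
    and Q: "Q \<in> S" "x \<in> Q" "x \<in> H" "generate G {x} = H"
    and Y: "Y \<in> S" "y \<in> Y" "y \<in> H" "generate G {y} = H"
    and R: "subgroup R G" "R \<subseteq> stab Q"
  shows "R \<subseteq> stab Y"
proof -
  obtain m where m: "0 < m" "coprime m (p ^ k)" "y = x [^] m"
    using gens_pow[OF H Hne Q(3,4) Y(3,4)] by blast
  have PQ: "pw m Q \<in> S" by (rule basic_pow[OF Q(1) m(1,2)])
  have "y \<in> pw m Q" using m(3) Q(2) by blast
  then have YPQ: "pw m Q = Y" using S_disj[OF PQ Y(1) _ Y(2)] by blast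
  obtain u where u: "0 < u" "coprime u (p ^ k)" "\<forall>x\<in>carrier G. (x [^] m) [^] u = x"
    using pow_inverse[OF m(1,2)] by blast
  have Qc: "Q \<subseteq> carrier G" using S_sub[OF Q(1)] .
  show "R \<subseteq> stab Y"
  proof
    fix r assume r: "r \<in> R"
    have rc: "r \<in> carrier G" using subgroup.mem_carrier[OF R(1) r] .
    define r' where "r' = r [^] u"
    have r'R: "r' \<in> R" unfolding r'_def by (rule sub_pow[OF R(1) r])
    have r'c: "r' \<in> carrier G" using subgroup.mem_carrier[OF R(1) r'R] .
    have "r' [^] m = (r [^] m) [^] u" unfolding r'_def using rc by (simp add: nat_pow_pow mult.commute)
    also have "\<dots> = r" using u(3) rc by blast
    finally have r'm: "r' [^] m = r" .
    have "\<forall>w\<in>Y. w \<otimes> r \<in> Y"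
    proof
      fix w assume "w \<in> Y"
      then have "w \<in> pw m Q" using YPQ by simp
      then obtain x' where x': "x' \<in> Q" "w = x' [^] m" by blast
      have x'c: "x' \<in> carrier G" using x' Qc by auto
      have "x' \<otimes> r' \<in> Q" using R(2) r'R x'(1) unfolding stab_def by blast
      moreover have "w \<otimes> r = (x' \<otimes> r') [^] m" using x' r'm x'c r'c by (simp add: nat_pow_distrib)
      ultimately have "w \<otimes> r \<in> pw m Q" by blast
      then show "w \<otimes> r \<in> Y" using YPQ by simp
    qed
    then show "r \<in> stab Y" unfolding stab_def using rc by simp
  qed
qed

lemma inv_stab:
  assumes Ac: "A \<subseteq> carrier G" and R: "subgroup R G" and st: "R \<subseteq> stab ((\<lambda>x. inv x) ` A)"
  shows "R \<subseteq> stab A"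
proof
  fix r assume r: "r \<in> R"
  have rc: "r \<in> carrier G" using subgroup.mem_carrier[OF R r] .
  have ir: "inv r \<in> R" using subgroup.m_inv_closed[OF R r] .
  have "\<forall>a\<in>A. a \<otimes> r \<in> A"
  proof
    fix a assume a: "a \<in> A"
    have ac: "a \<in> carrier G" using a Ac by auto
    have "inv a \<otimes> inv r \<in> (\<lambda>x. inv x) ` A" using st ir a unfolding stab_def by blast
    then obtain b where b: "b \<in> A" "inv a \<otimes> inv r = inv b" by blast
    have bc: "b \<in> carrier G" using b Ac by auto
    have "a \<otimes> r = inv (inv a \<otimes> inv r)" using ac rc by (simp add: inv_mult_group m_comm)
    also have "\<dots> = b" using b bc by simp
    finally show "a \<otimes> r \<in> A" using b by simp
  qed
  then show "r \<in> stab A" unfolding stab_def using rc by simp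
qed

definition good :: "'a set \<Rightarrow> 'a set \<Rightarrow> 'a set \<Rightarrow> bool" where
  "good H U L \<longleftrightarrow> subgroup U G \<and> A_set G S U \<and> subgroup L G \<and> A_set G S L \<and> L \<subseteq> U \<and> U \<subseteq> H \<and>
     U \<noteq> H \<and> L \<noteq> {\<one>} \<and> (\<forall>A\<in>S. A \<subseteq> H \<longrightarrow> \<not> A \<subseteq> U \<longrightarrow> L \<subseteq> stab A) \<and>
     rad_Sring G U (restr S U) = {\<one>}"

end



context cyc begin

lemma W_construct:
  assumes H: "subgroup H G" and Hne: "H \<noteq> {\<one>}" and V: "A_set G S V" "V \<subseteq> H" "\<one> \<in> V"
    and Vinv: "\<forall>v\<in>V. inv v \<in> V" and Vng: "\<forall>v\<in>V. generate G {v} \<noteq> H"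
  shows "\<exists>U. subgroup U G \<and> A_set G S U \<and> V \<subseteq> U \<and> U \<subseteq> H \<and> U \<noteq> H"
proof -
  have Hc: "H \<subseteq> carrier G" using subgroup.subset[OF H] .
  have Vc: "V \<subseteq> carrier G" using V(2) Hc by blast
  have fH: "finite H" using Hc finG finite_subset by blast
  define pv where "pv n = ((\<lambda>Z. prodset V Z) ^^ n) {\<one>}" for n
  have pv0: "pv 0 = {\<one>}" unfolding pv_def by simp
  have pvS: "pv (Suc n) = prodset V (pv n)" for n unfolding pv_def by simp
  define NG where "NG = {w\<in>H. generate G {w} \<noteq> H}"
  have A: "A_set G S (pv n)" for n
  proof (induction n)
    case 0 then show ?case unfolding pv0 using Aset_basic[OF S_one] by simp
  next
    case (Suc n) then show ?case unfolding pvS using Aset_prodset[OF V(1)] by blast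
  qed
  have NGp: "pv n \<subseteq> NG" for n
  proof (induction n)
    case 0
    have "\<one> \<in> NG" unfolding NG_def using subgroup.one_closed[OF H] one_nongen[OF Hne] by simp
    then show ?case unfolding pv0 by simp
  next
    case (Suc n)
    show ?case
    proof
      fix w assume "w \<in> pv (Suc n)"
      then obtain v a where va: "w = v \<otimes> a" "v \<in> V" "a \<in> pv n" unfolding pvS prodset_def by blast
      have vH: "v \<in> H" using va(2) V(2) by blast
      have aN: "a \<in> NG" using va(3) Suc.IH by blast
      then have aH: "a \<in> H" and ang: "generate G {a} \<noteq> H" unfolding NG_def by auto
      have "generate G {v \<otimes> a} \<noteq> H" using nongen_mult[OF H vH aH] Vng va(2) ang by blast
      moreover have "v \<otimes> a \<in> H" using subgroup.m_closed[OF H vH aH] .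
      ultimately show "w \<in> NG" unfolding NG_def using va(1) by simp
    qed
  qed
  have pvH: "pv n \<subseteq> H" for n using NGp[of n] unfolding NG_def by blast
  have pvc: "pv n \<subseteq> carrier G" for n using pvH[of n] Hc by blast
  have step: "pv n \<subseteq> pv (Suc n)" for n
  proof
    fix w assume w: "w \<in> pv n"
    have "w = \<one> \<otimes> w" using w pvc[of n] by auto
    then show "w \<in> pv (Suc n)" unfolding pvS prodset_def using w V(3) by blast
  qed
  have mono: "a \<le> b \<Longrightarrow> pv a \<subseteq> pv b" for a b
    using lift_Suc_mono_le[of pv, OF step] by blast
  have "\<exists>N. pv (Suc N) = pv N"
  proof (rule ccontr)
    assume "\<not> (\<exists>N. pv (Suc N) = pv N)"
    then have ne: "pv (Suc n) \<noteq> pv n" for n by blast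
    have cge: "n + 1 \<le> card (pv n)" for n
    proof (induction n)
      case 0 then show ?case unfolding pv0 by simp
    next
      case (Suc n)
      have "pv n \<subset> pv (Suc n)" using step[of n] ne[of n] by blast
      moreover have "finite (pv (Suc n))" using pvH[of "Suc n"] fH finite_subset by blast
      ultimately have "card (pv n) < card (pv (Suc n))" by (rule psubset_card_mono[rotated])
      then show ?case using Suc.IH by simp
    qed
    have "card (pv (card H)) \<le> card H" using card_mono[OF fH pvH] .
    then show False using cge[of "card H"] by simp
  qed
  then obtain N where N: "pv (Suc N) = pv N" by blast
  define W where "W = pv N"
  have WV: "prodset V W = W" unfolding W_def using N pvS by simp
  have mulW: "\<forall>a\<in>pv n. \<forall>w\<in>W. a \<otimes> w \<in> W" for n
  proof (induction n)
    case 0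
    have "W \<subseteq> carrier G" unfolding W_def using pvc .
    then show ?case unfolding pv0 by auto
  next
    case (Suc n)
    show ?case
    proof (intro ballI)
      fix a w assume a: "a \<in> pv (Suc n)" and w: "w \<in> W"
      then obtain v b where vb: "a = v \<otimes> b" "v \<in> V" "b \<in> pv n" unfolding pvS prodset_def by blast
      have vc: "v \<in> carrier G" using vb(2) Vc by blast
      have bc: "b \<in> carrier G" using vb(3) pvc by blast
      have wc: "w \<in> carrier G" using w pvc unfolding W_def by blast
      have bw: "b \<otimes> w \<in> W" using Suc.IH vb(3) w by blast
      have "a \<otimes> w = v \<otimes> (b \<otimes> w)" using vb(1) vc bc wc by (simp add: m_assoc)
      moreover have "v \<otimes> (b \<otimes> w) \<in> prodset V W" unfolding prodset_def using vb(2) bw by blast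
      ultimately show "a \<otimes> w \<in> W" using WV by simp
    qed
  qed
  have invp: "\<forall>a\<in>pv n. inv a \<in> pv n" for n
  proof (induction n)
    case 0 then show ?case unfolding pv0 by simp
  next
    case (Suc n)
    show ?case
    proof
      fix a assume a: "a \<in> pv (Suc n)"
      then obtain v b where vb: "a = v \<otimes> b" "v \<in> V" "b \<in> pv n" unfolding pvS prodset_def by blast
      have vc: "v \<in> carrier G" using vb(2) Vc by blast
      have bc: "b \<in> carrier G" using vb(3) pvc by blast
      have "inv a = inv v \<otimes> inv b" using vb(1) vc bc by (simp add: inv_mult_group m_comm)
      moreover have "inv v \<in> V" using Vinv vb(2) by blast
      moreover have "inv b \<in> pv n" using Suc.IH vb(3) by blast
      ultimately show "inv a \<in> pv (Suc n)" unfolding pvS prodset_def by blast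
    qed
  qed
  have one_W: "\<one> \<in> W" unfolding W_def using mono[of 0 N] pv0 by auto
  have sW: "subgroup W G"
  proof (rule subgroupI)
    show "W \<subseteq> carrier G" unfolding W_def by (rule pvc)
    show "W \<noteq> {}" using one_W by blast
    show "inv a \<in> W" if "a \<in> W" for a using invp that unfolding W_def by blast
    show "a \<otimes> b \<in> W" if "a \<in> W" "b \<in> W" for a b using mulW[of N] that unfolding W_def by blast
  qed
  have "V \<subseteq> pv 1"
  proof
    fix v assume v: "v \<in> V"
    have "v = v \<otimes> \<one>" using v Vc by auto
    moreover have "pv 1 = prodset V {\<one>}" using pvS[of 0] pv0 by simp
    ultimately show "v \<in> pv 1" unfolding prodset_def using v by blast
  qed
  then have VW: "V \<subseteq> W" using mono[of 1 "Suc N"] N unfolding W_def by simp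
  have WH: "W \<subseteq> H" unfolding W_def by (rule pvH)
  have "W \<noteq> H"
  proof
    assume e: "W = H"
    obtain w where w: "w \<in> W" "generate G {w} = W" using subgroup_cyclic[OF sW] by blast
    have "w \<in> NG" using w(1) NGp unfolding W_def by blast
    then show False using w(2) e unfolding NG_def by simp
  qed
  then show ?thesis using sW A[of N] VW WH unfolding W_def by blast
qed

end



context cyc begin

lemma main:
  shows "subgroup H G \<Longrightarrow> A_set G S H \<Longrightarrow> rad_Sring G H (restr S H) \<noteq> {\<one>} \<Longrightarrow> \<exists>U L. good H U L"
proof (induction "card H" arbitrary: H rule: less_induct)
  case less
  have sH: "subgroup H G" and AH: "A_set G S H" and rne: "rad_Sring G H (restr S H) \<noteq> {\<one>}"
    using less.prems by auto
  have Hc: "H \<subseteq> carrier G" using subgroup.subset[OF sH] .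
  have fH: "finite H" using Hc finG finite_subset by blast
  obtain h where h: "h \<in> H" "generate G {h} = H" using subgroup_cyclic[OF sH] by blast
  have hc: "h \<in> carrier G" using h(1) Hc by blast
  obtain A0 where A0: "A0 \<in> S" "h \<in> A0" using S_cover[OF hc] by blast
  have A0H: "A0 \<subseteq> H" using Aset_basic_sub[OF AH A0 h(1)] .
  have ex: "\<exists>A. A \<in> restr S H \<and> (\<exists>x\<in>A. generate G {x} = H)"
    using A0 A0H h unfolding restr_def by blast
  define Q where "Q = (SOME A. A \<in> restr S H \<and> (\<exists>x\<in>A. generate G {x} = H))"
  have Qp: "Q \<in> restr S H \<and> (\<exists>x\<in>Q. generate G {x} = H)" unfolding Q_def by (rule someI_ex[OF ex])
  then have QS: "Q \<in> S" and QH: "Q \<subseteq> H" unfolding restr_def by auto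
  obtain x0 where x0: "x0 \<in> Q" "generate G {x0} = H" using Qp by blast
  have x0H: "x0 \<in> H" using x0(1) QH by blast
  have Qc: "Q \<subseteq> carrier G" using S_sub[OF QS] .
  define R where "R = H \<inter> stab Q"
  have radR: "rad_Sring G H (restr S H) = R"
    unfolding rad_Sring_def Q_def[symmetric] R_def using rad_stab[OF Qc Hc] .
  have Rne: "R \<noteq> {\<one>}" using rne radR by simp
  have sR: "subgroup R G" unfolding R_def by (rule subgroups_Inter_pair[OF sH stab_subgroup[OF Qc]])
  have AR: "A_set G S R" unfolding R_def by (rule Aset_Int[OF AH Aset_stab[OF Aset_basic[OF QS]]])
  have RH: "R \<subseteq> H" unfolding R_def by blast
  have RQ: "R \<subseteq> stab Q" unfolding R_def by blast
  have oneR: "\<one> \<in> R" using subgroup.one_closed[OF sR] .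
  have Hne: "H \<noteq> {\<one>}"
  proof
    assume "H = {\<one>}" then have "R = {\<one>}" using RH oneR by blast
    then show False using Rne by simp
  qed
  have Rng: "\<forall>r\<in>R. generate G {r} \<noteq> H"
  proof
    fix r assume r: "r \<in> R"
    show "generate G {r} \<noteq> H"
    proof
      assume e: "generate G {r} = H"
      have "H \<subseteq> R" using gen_sub[OF sR r] e by simp
      then have "inv x0 \<in> stab Q" using RQ subgroup.m_inv_closed[OF sH x0H] by blast
      then have "x0 \<otimes> inv x0 \<in> Q" using x0(1) unfolding stab_def by blast
      moreover have "x0 \<in> carrier G" using x0H Hc by blast
      ultimately have "\<one> \<in> Q" by simp
      then have "Q = {\<one>}" using S_disj[OF QS S_one] by blast
      then have "x0 = \<one>" using x0(1) by blast
      then show False using x0(2) one_nongen[OF Hne] by simp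
    qed
  qed
  have gen_stab: "R \<subseteq> stab Y" if Y: "Y \<in> S" "Y \<subseteq> H" "y \<in> Y" "generate G {y} = H" for Y y
  proof -
    have "y \<in> H" using Y by blast
    then show ?thesis using stab_transfer[OF sH Hne QS x0(1) x0H x0(2) Y(1) Y(3) _ Y(4) sR RQ] by blast
  qed
  define NS where "NS = {A\<in>S. A \<subseteq> H \<and> \<not> R \<subseteq> stab A}"
  define V where "V = \<Union>NS \<union> R"
  have AV: "A_set G S V" unfolding V_def
  proof (rule Aset_Un[OF Aset_Union AR])
    fix Y assume "Y \<in> NS" then show "A_set G S Y" unfolding NS_def using Aset_basic by blast
  qed
  have VH: "V \<subseteq> H" unfolding V_def NS_def using RH by blast
  have oneV: "\<one> \<in> V" unfolding V_def using oneR by blast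
  have Vinv: "\<forall>v\<in>V. inv v \<in> V"
  proof
    fix v assume "v \<in> V"
    then consider "v \<in> R" | A where "A \<in> NS" "v \<in> A" unfolding V_def by blast
    then show "inv v \<in> V"
    proof cases
      case 1 then show ?thesis using subgroup.m_inv_closed[OF sR] unfolding V_def by blast
    next
      case 2
      have AS: "A \<in> S" and AHs: "A \<subseteq> H" and nst: "\<not> R \<subseteq> stab A" using 2(1) unfolding NS_def by auto
      have IS: "(\<lambda>x. inv x) ` A \<in> S" using S_inv[OF AS] .
      have IH: "(\<lambda>x. inv x) ` A \<subseteq> H" using AHs subgroup.m_inv_closed[OF sH] by blast
      have "\<not> R \<subseteq> stab ((\<lambda>x. inv x) ` A)" using inv_stab[OF S_sub[OF AS] sR] nst by blast
      then have "(\<lambda>x. inv x) ` A \<in> NS" unfolding NS_def using IS IH by blast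
      moreover have "inv v \<in> (\<lambda>x. inv x) ` A" using 2(2) by blast
      ultimately have "inv v \<in> \<Union>NS" by (rule UnionI)
      then show ?thesis unfolding V_def by (rule UnI1)
    qed
  qed
  have Vng: "\<forall>v\<in>V. generate G {v} \<noteq> H"
  proof
    fix v assume "v \<in> V"
    then consider "v \<in> R" | A where "A \<in> NS" "v \<in> A" unfolding V_def by blast
    then show "generate G {v} \<noteq> H"
    proof cases
      case 1 then show ?thesis using Rng by blast
    next
      case 2
      have AS: "A \<in> S" and AHs: "A \<subseteq> H" and nst: "\<not> R \<subseteq> stab A" using 2(1) unfolding NS_def by auto
      show ?thesis
      proof
        assume "generate G {v} = H"
        then have "R \<subseteq> stab A" using gen_stab[OF AS AHs 2(2)] by blast
        then show False using nst by blast
      qed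
    qed
  qed
  obtain U where U: "subgroup U G" "A_set G S U" "V \<subseteq> U" "U \<subseteq> H" "U \<noteq> H"
    using W_construct[OF sH Hne AV VH oneV Vinv Vng] by blast
  have RU: "R \<subseteq> U" using U(3) unfolding V_def by blast
  have outside: "R \<subseteq> stab A" if A: "A \<in> S" "A \<subseteq> H" "\<not> A \<subseteq> U" for A
  proof (rule ccontr)
    assume "\<not> R \<subseteq> stab A"
    then have "A \<in> NS" unfolding NS_def using A by blast
    then have "A \<subseteq> V" unfolding V_def by blast
    then show False using U(3) A(3) by blast
  qed
  show ?case
  proof (cases "rad_Sring G U (restr S U) = {\<one>}")
    case True
    have "good H U R" unfolding good_def using U sR AR RU Rne outside True by blast
    then show ?thesis by blast
  next
    case False
    have "U \<subset> H" using U(4,5) by blast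
    then have clt: "card U < card H" by (rule psubset_card_mono[OF fH])
    obtain U' L' where g: "good U U' L'" using less.hyps[OF clt U(1) U(2) False] by blast
    have sL': "subgroup L' G" using g unfolding good_def by blast
    have ch: "R \<subseteq> L' \<or> L' \<subseteq> R" using subgroup_chain[OF sR sL'] .
    define L where "L = (if R \<subseteq> L' then R else L')"
    have LR: "L \<subseteq> R" and LL': "L \<subseteq> L'" using ch unfolding L_def by auto
    have sL: "subgroup L G" using sR sL' unfolding L_def by simp
    have AL: "A_set G S L" using AR g unfolding L_def good_def by simp
    have Lne: "L \<noteq> {\<one>}" using Rne g unfolding L_def good_def by simp
    have g': "subgroup U' G" "A_set G S U'" "L' \<subseteq> U'" "U' \<subseteq> U" "U' \<noteq> U"
      "\<forall>A\<in>S. A \<subseteq> U \<longrightarrow> \<not> A \<subseteq> U' \<longrightarrow> L' \<subseteq> stab A" "rad_Sring G U' (restr S U') = {\<one>}"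
      using g unfolding good_def by auto
    have LU': "L \<subseteq> U'" using LL' g'(3) by blast
    have U'H: "U' \<subseteq> H" using g'(4) U(4) by blast
    have U'ne: "U' \<noteq> H" using g'(4) U(4,5) by blast
    have out': "L \<subseteq> stab A" if A: "A \<in> S" "A \<subseteq> H" "\<not> A \<subseteq> U'" for A
    proof (cases "A \<subseteq> U")
      case True then show ?thesis using g'(6) A LL' by blast
    next
      case False then show ?thesis using outside[OF A(1,2) False] LR by blast
    qed
    have "good H U' L" unfolding good_def using g'(1,2,7) sL AL LU' U'H U'ne Lne out' by blast
    then show ?thesis by blast
  qed
qed

end


theorem lemma5p2:
  fixes G :: "('a, 'b) monoid_scheme" and S :: "'a set set" and p k :: nat
  assumes "group G" and "finite (carrier G)"
    and "Factorial_Ring.prime p" and "card (carrier G) = p ^ k"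
    and "\<exists>g\<in>carrier G. generate G {g} = carrier G"
    and "is_Sring G S"
    and "rad_Sring G (carrier G) S \<noteq> {\<one>\<^bsub>G\<^esub>}"
  shows "\<exists>U L. A_section G S U L \<and> proper_wreath G S U L \<and>
           rad_Sring G U (restr S U) = {\<one>\<^bsub>G\<^esub>}"
proof -
  note grp = assms(1)
  obtain g where g: "g \<in> carrier G" "generate G {g} = carrier G" using assms(5) by blast
  have pw_g: "\<exists>i::nat. x = g [^]\<^bsub>G\<^esub> i" if x: "x \<in> carrier G" for x
  proof -
    have "x \<in> generate G {g}" using x g(2) by simp
    then have "x \<in> { g [^]\<^bsub>G\<^esub> k | k. k \<in> (UNIV :: nat set) }"
      using group.generate_pow_on_finite_carrier[OF grp assms(2) g(1)] by simp
    then show ?thesis by blast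
  qed
  have cg: "comm_group G"
  proof (rule group.group_comm_groupI[OF grp])
    fix x y assume x: "x \<in> carrier G" and y: "y \<in> carrier G"
    obtain i where i: "x = g [^]\<^bsub>G\<^esub> (i::nat)" using pw_g[OF x] by blast
    obtain j where j: "y = g [^]\<^bsub>G\<^esub> (j::nat)" using pw_g[OF y] by blast
    have "x \<otimes>\<^bsub>G\<^esub> y = g [^]\<^bsub>G\<^esub> (i + j)"
      unfolding i j by (rule monoid.nat_pow_mult[OF group.is_monoid[OF grp] g(1)])
    also have "\<dots> = g [^]\<^bsub>G\<^esub> (j + i)" by (simp add: add.commute)
    also have "\<dots> = y \<otimes>\<^bsub>G\<^esub> x"
      unfolding i j by (rule monoid.nat_pow_mult[OF group.is_monoid[OF grp] g(1), symmetric])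
    finally show "x \<otimes>\<^bsub>G\<^esub> y = y \<otimes>\<^bsub>G\<^esub> x" .
  qed
  interpret C: cyc G S g p k
    unfolding cyc_def cyc_axioms_def sr_def sr_axioms_def
    using cg assms(2,3,4,6) g by blast
  have rS: "restr S (carrier G) = S" unfolding restr_def using C.S_sub by blast
  have sC: "subgroup (carrier G) G" by (rule group.subgroup_self[OF grp])
  have "rad_Sring G (carrier G) (restr S (carrier G)) \<noteq> {\<one>\<^bsub>G\<^esub>}" using assms(7) rS by simp
  then obtain U L where gd: "C.good (carrier G) U L" using C.main[OF sC C.Aset_carrier] by blast
  have sU: "subgroup U G" and AU: "A_set G S U" and sL: "subgroup L G" and AL: "A_set G S L"
    and LU: "L \<subseteq> U" and Une: "U \<noteq> carrier G" and Lne: "L \<noteq> {\<one>\<^bsub>G\<^esub>}"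
    and out: "\<forall>A\<in>S. A \<subseteq> carrier G \<longrightarrow> \<not> A \<subseteq> U \<longrightarrow> L \<subseteq> C.stab A"
    and rU: "rad_Sring G U (restr S U) = {\<one>\<^bsub>G\<^esub>}"
    using gd unfolding C.good_def by auto
  have grpU: "group (G\<lparr>carrier := U\<rparr>)" by (rule group.subgroup_imp_group[OF grp sU])
  have cgU: "comm_group (G\<lparr>carrier := U\<rparr>)"
  proof (rule group.group_comm_groupI[OF grpU])
    fix x y assume "x \<in> carrier (G\<lparr>carrier := U\<rparr>)" "y \<in> carrier (G\<lparr>carrier := U\<rparr>)"
    then have "x \<in> carrier G" "y \<in> carrier G" using subgroup.subset[OF sU] by auto
    then show "x \<otimes>\<^bsub>G\<lparr>carrier := U\<rparr>\<^esub> y = y \<otimes>\<^bsub>G\<lparr>carrier := U\<rparr>\<^esub> x"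
      using C.m_comm by simp
  qed
  have sLU: "subgroup L (G\<lparr>carrier := U\<rparr>)" by (rule group.subgroup_incl[OF grp sL sU LU])
  have nLU: "L \<lhd> G\<lparr>carrier := U\<rparr>" by (rule comm_group.subgroup_imp_normal[OF cgU sLU])
  have nL: "L \<lhd> G" by (rule comm_group.subgroup_imp_normal[OF cg sL])
  have sec: "A_section G S U L"
    unfolding A_section_def A_subgroup_def using sU AU sL AL LU nLU by blast
  have wr: "wreath G S U L"
    unfolding wreath_def
  proof (intro conjI ballI impI)
    show "L \<lhd> G" by (rule nL)
    fix A assume A: "A \<in> S" "\<not> A \<subseteq> U"
    have Ac: "A \<subseteq> carrier G" by (rule C.S_sub[OF A(1)])
    have "L \<subseteq> C.stab A" using out A Ac by blast
    moreover have "L \<subseteq> carrier G" by (rule subgroup.subset[OF sL])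
    ultimately show "L \<subseteq> rad G (carrier G) A" using C.rad_stab[OF Ac subset_refl] by blast
  qed
  have "proper_wreath G S U L" unfolding proper_wreath_def using wr Lne Une by blast
  then show ?thesis using sec rU by blast
qed

end
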